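(* Let $\lambda$ be a nonempty partition with Frobenius coordinates $(\vec s|\vec t)$ of rank $d$. Then, as rational functions of $R$, $$\tilde s^{(R)}_\lambda=\left|\tilde s^{(R)}_{(s_i|t_j)}\right|_{d\times d}=\left|\frac{\Gamma(R-t_j)/\Gamma(R+s_i+1)}{s_i!\,t_j!\,(1+s_i+t_j)}\right|_{d\times d}.$$
   Context: For an integer $m\ge0$, $\tilde h^{(R)}_m:=\frac{(R-1)!}{(R+m-1)!\,m!}=\frac{1}{m!\,R(R+1)\cdots(R+m-1)}$, and $\tilde h^{(R)}_m:=0$ for $m<0$. For a partition $\mu$ with $l(\mu)$ parts, $\tilde s^{(R)}_\mu:=\left|\tilde h^{(R-j+1)}_{\mu_i-i+j}\right|_{l(\mu)\times l(\mu)}$ (determinant). Frobenius coordinates of a partition of rank $d$ (number of $i$ with $\lambda_i\ge i$): $s_i=\lambda_i-i$, $t_i=\lambda^t_i-i$; $(s|t)$ denotes the hook partition $(s+1,1^t)$. $\Gamma(R-t)/\Gamma(R+s+1)=1/\big((R-t)(R-t+1)\cdots(R+s)\big)$. *)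

theory Defs
  imports Complex_Main "Jordan_Normal_Form.Determinant"
begin

definition is_partition :: "nat list \<Rightarrow> bool" where
  "is_partition lam \<longleftrightarrow> sorted_wrt (\<ge>) lam \<and> 0 \<notin> set lam"

definition part :: "nat list \<Rightarrow> nat \<Rightarrow> nat" where
  "part lam i = (if 1 \<le> i \<and> i \<le> length lam then lam ! (i - 1) else 0)"

definition conj_part :: "nat list \<Rightarrow> nat \<Rightarrow> nat" where
  "conj_part lam i = card {k \<in> {1..length lam}. part lam k \<ge> i}"

definition prank :: "nat list \<Rightarrow> nat" where
  "prank lam = card {i \<in> {1..length lam}. part lam i \<ge> i}"

definition frob_s :: "nat list \<Rightarrow> nat \<Rightarrow> nat" where
  "frob_s lam i = part lam i - i"

definition frob_t :: "nat list \<Rightarrow> nat \<Rightarrow> nat" where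
  "frob_t lam i = conj_part lam i - i"

text \<open>Hook partition (s|t) = (s+1, 1^t).\<close>
definition hook :: "nat \<Rightarrow> nat \<Rightarrow> nat list" where
  "hook s t = (s + 1) # replicate t 1"

definition htilde :: "real \<Rightarrow> int \<Rightarrow> real" where
  "htilde R m = (if m < 0 then 0
     else 1 / (fact (nat m) * pochhammer R (nat m)))"

text \<open>s~^(R)_mu = det [h~^(R-j+1)_(mu_i - i + j)]_{i,j=1..l(mu)};
  written with 0-based indices i,j < l(mu).\<close>
definition stilde :: "real \<Rightarrow> nat list \<Rightarrow> real" where
  "stilde R mu = det (mat (length mu) (length mu)
     (\<lambda>(i, j). htilde (R - real j) (int (part mu (i + 1)) - int i + int j)))"

text \<open>Gamma(R-t)/Gamma(R+s+1) = 1/((R-t)(R-t+1)...(R+s)).\<close>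
definition gamma_ratio :: "real \<Rightarrow> nat \<Rightarrow> nat \<Rightarrow> real" where
  "gamma_ratio R s t = 1 / pochhammer (R - real t) (s + t + 1)"

end

theory Submission
  imports Defs
begin


lemma det_mat0: "det (mat 0 0 f) = (1::'a::comm_ring_1)"
  by (subst det_upper_triangular[of _ 0]) (auto simp: upper_triangular_def diag_mat_def)

lemma lemG:
  fixes C :: "nat \<Rightarrow> nat \<Rightarrow> real" and b u :: "nat \<Rightarrow> nat"
  assumes "d \<le> n" "\<forall>k<d. b k < n" "\<forall>k k'. k < k' \<longrightarrow> k' < d \<longrightarrow> b k' < b k"
    "\<forall>r r'. r < r' \<longrightarrow> r' < n - d \<longrightarrow> u r < u r'" "\<forall>r<n-d. u r < n"
    "\<forall>k<d. \<forall>r<n-d. b k \<noteq> u r"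
  shows "det (mat n n (\<lambda>(i,j). if i<d then C i j else of_bool (j = u (i-d)))) =
         det (mat d d (\<lambda>(i,k). (-1)^(b k) * C i (b k)))"
  using assms
proof (induction n arbitrary: d C b)
  case 0
  then show ?case by (simp add: det_mat0)
next
  case (Suc n')
  define M where "M = mat (Suc n') (Suc n') (\<lambda>(i,j). if i<d then C i j else of_bool (j = u (i-d)))"
  have MC: "M \<in> carrier_mat (Suc n') (Suc n')" unfolding M_def by simp
  have injb: "inj_on b {..<d}"
  proof (rule inj_onI)
    fix x y assume "x \<in> {..<d}" "y \<in> {..<d}" "b x = b y"
    then show "x = y" using Suc.prems(3) by (metis lessThan_iff nat_neq_iff)
  qed
  have inju: "inj_on u {..<Suc n' - d}"
  proof (rule inj_onI)
    fix x y assume "x \<in> {..<Suc n' - d}" "y \<in> {..<Suc n' - d}" "u x = u y"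
    then show "x = y" using Suc.prems(4) by (metis lessThan_iff nat_neq_iff)
  qed
  have cov: "n' \<in> b`{..<d} \<union> u`{..<Suc n' - d}"
  proof (rule ccontr)
    assume nin: "n' \<notin> b`{..<d} \<union> u`{..<Suc n' - d}"
    have sub: "b`{..<d} \<union> u`{..<Suc n' - d} \<subseteq> {..<n'}"
      using nin Suc.prems(2,5) by (auto simp: less_Suc_eq)
    have disj: "b`{..<d} \<inter> u`{..<Suc n' - d} = {}" using Suc.prems(6) by auto
    have "card (b`{..<d} \<union> u`{..<Suc n' - d}) = d + (Suc n' - d)"
      using card_Un_disjoint[OF _ _ disj] card_image[OF injb] card_image[OF inju] by simp
    also have "\<dots> = Suc n'" using Suc.prems(1) by simp
    finally have "Suc n' \<le> n'" using card_mono[OF _ sub] by simp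
    then show False by simp
  qed
  show ?case
  proof (cases "0 < d \<and> b 0 = n'")
    case True
    then have d0: "0 < d" and b0: "b 0 = n'" by auto
    have "det M = (\<Sum>i<Suc n'. M $$ (i,n') * cofactor M i n')"
      by (rule laplace_expansion_column[OF MC]) simp
    also have "\<dots> = (\<Sum>i<d. M $$ (i,n') * cofactor M i n')"
    proof (rule sum.mono_neutral_right)
      show "\<forall>i\<in>{..<Suc n'} - {..<d}. M $$ (i, n') * cofactor M i n' = 0"
      proof
        fix i assume i: "i \<in> {..<Suc n'} - {..<d}"
        then have "u (i - d) \<noteq> n'" using Suc.prems(6) d0 b0 by (metis Diff_iff lessThan_iff Suc.prems(1) diff_less_mono not_less)
        then show "M $$ (i, n') * cofactor M i n' = 0" using i unfolding M_def by auto
      qed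
    qed (use Suc.prems(1) in auto)
    also have "\<dots> = (\<Sum>i<d. (-1)^(b 0) * C i (b 0) * ((-1)^i *
        det (mat (d-1) (d-1) (\<lambda>(p,k). (-1)^(b (Suc k)) * C (insert_index i p) (b (Suc k))))))"
    proof (rule sum.cong[OF refl])
      fix i assume i: "i \<in> {..<d}"
      have del: "mat_delete M i n' = mat n' n' (\<lambda>(p,q). if p < d-1 then C (insert_index i p) q
           else of_bool (q = u (p - (d-1))))"
        using i unfolding M_def mat_delete_def
        by (intro eq_matI) (auto simp: insert_index_def)
      have IH: "det (mat n' n' (\<lambda>(p,q). if p < d-1 then C (insert_index i p) q
           else of_bool (q = u (p - (d-1))))) =
         det (mat (d-1) (d-1) (\<lambda>(p,k). (-1)^(b (Suc k)) * C (insert_index i p) (b (Suc k))))"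
      proof (rule Suc.IH)
        show "d - 1 \<le> n'" using Suc.prems(1) by simp
        show "\<forall>k<d - 1. b (Suc k) < n'" using Suc.prems(3) b0 by auto
        show "\<forall>k k'. k < k' \<longrightarrow> k' < d - 1 \<longrightarrow> b (Suc k') < b (Suc k)" using Suc.prems(3) by auto
        show "\<forall>r r'. r < r' \<longrightarrow> r' < n' - (d - 1) \<longrightarrow> u r < u r'" using Suc.prems(4) d0 by auto
        show "\<forall>r<n' - (d - 1). u r < n'"
        proof (intro allI impI)
          fix r assume r: "r < n' - (d - 1)"
          then have r': "r < Suc n' - d" using d0 by arith
          then have "u r < Suc n'" "u r \<noteq> n'" using Suc.prems(5) Suc.prems(6)[rule_format, OF d0 r'] b0 by auto
          then show "u r < n'" by simp
        qed
        show "\<forall>k<d - 1. \<forall>r<n' - (d - 1). b (Suc k) \<noteq> u r" using Suc.prems(6) d0 by auto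
      qed
      have "M $$ (i,n') = C i n'" using i Suc.prems(1) unfolding M_def by auto
      then show "M $$ (i, n') * cofactor M i n' = (-1)^(b 0) * C i (b 0) * ((-1)^i *
        det (mat (d-1) (d-1) (\<lambda>(p,k). (-1)^(b (Suc k)) * C (insert_index i p) (b (Suc k)))))"
        unfolding cofactor_def del IH b0 by (simp add: power_add)
    qed
    also have "\<dots> = det (mat d d (\<lambda>(i,k). (-1)^(b k) * C i (b k)))"
    proof -
      define D where "D = mat d d (\<lambda>(i,k). (-1)^(b k) * C i (b k))"
      have DC: "D \<in> carrier_mat d d" unfolding D_def by simp
      have "det D = (\<Sum>i<d. D $$ (i,0) * cofactor D i 0)"
        by (rule laplace_expansion_column[OF DC d0])
      also have "\<dots> = (\<Sum>i<d. (-1)^(b 0) * C i (b 0) * ((-1)^i *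
        det (mat (d-1) (d-1) (\<lambda>(p,k). (-1)^(b (Suc k)) * C (insert_index i p) (b (Suc k))))))"
      proof (rule sum.cong[OF refl])
        fix i assume i: "i \<in> {..<d}"
        have del: "mat_delete D i 0 = mat (d-1) (d-1) (\<lambda>(p,k). (-1)^(b (Suc k)) * C (insert_index i p) (b (Suc k)))"
          using i unfolding D_def mat_delete_def
          by (intro eq_matI) (auto simp: insert_index_def)
        show "D $$ (i, 0) * cofactor D i 0 = (-1)^(b 0) * C i (b 0) * ((-1)^i *
        det (mat (d-1) (d-1) (\<lambda>(p,k). (-1)^(b (Suc k)) * C (insert_index i p) (b (Suc k)))))"
          using i d0 unfolding cofactor_def del by (simp add: D_def)
      qed
      finally show ?thesis unfolding D_def by simp
    qed
    finally show ?thesis unfolding M_def .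
  next
    case False
    have nb: "\<forall>k<d. b k \<noteq> n'"
    proof (intro allI impI notI)
      fix k assume k: "k < d" "b k = n'"
      have "b k \<le> b 0" using Suc.prems(3) k by (cases k) (auto intro: less_imp_le)
      moreover have "0 < d" using k by simp
      moreover have "b 0 < Suc n'" using Suc.prems(2) \<open>0 < d\<close> by blast
      ultimately show False using False k by simp
    qed
    obtain r where r: "r < Suc n' - d" "u r = n'" using cov nb by auto
    define L where "L = Suc n' - d - 1"
    have rL: "r \<le> L" using r unfolding L_def by simp
    have uL: "u L = n'"
    proof -
      have Ll: "L < Suc n' - d" using r unfolding L_def by simp
      have "u r \<le> u L"
      proof (cases "r = L")
        case False
        then have "r < L" using rL by simp
        then show ?thesis using Suc.prems(4) Ll by (auto intro: less_imp_le)
      qed simp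
      moreover have "u L < Suc n'" using Suc.prems(5) r unfolding L_def by simp
      ultimately show ?thesis using r by simp
    qed
    have dn: "d \<le> n'" using r by simp
    have nd: "n' - d = L" unfolding L_def using dn by simp
    have "det M = (\<Sum>j<Suc n'. M $$ (n',j) * cofactor M n' j)"
      by (rule laplace_expansion_row[OF MC]) simp
    also have "\<dots> = (\<Sum>j<Suc n'. if j = n' then cofactor M n' j else 0)"
      by (rule sum.cong[OF refl]) (use dn nd uL in \<open>auto simp: M_def not_le\<close>)
    also have "\<dots> = cofactor M n' n'" by simp
    also have "\<dots> = det (mat_delete M n' n')" unfolding cofactor_def by simp
    also have "mat_delete M n' n' = mat n' n' (\<lambda>(i,j). if i<d then C i j else of_bool (j = u (i-d)))"
      unfolding M_def mat_delete_def by (intro eq_matI) auto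
    also have "det \<dots> = det (mat d d (\<lambda>(i,k). (-1)^(b k) * C i (b k)))"
    proof (rule Suc.IH)
      show "d \<le> n'" by (rule dn)
      show "\<forall>k<d. b k < n'" using nb Suc.prems(2) by (auto simp: less_Suc_eq)
      show "\<forall>k k'. k < k' \<longrightarrow> k' < d \<longrightarrow> b k' < b k" using Suc.prems(3) by auto
      show "\<forall>r r'. r < r' \<longrightarrow> r' < n' - d \<longrightarrow> u r < u r'" using Suc.prems(4) by auto
      show "\<forall>r<n' - d. u r < n'" using Suc.prems(4) uL nd L_def by (metis Suc_diff_le dn lessI)
      show "\<forall>k<d. \<forall>r<n' - d. b k \<noteq> u r" using Suc.prems(6) by auto
    qed
    finally show ?thesis unfolding M_def .
  qed
qed

definition Sb :: "nat \<Rightarrow> nat \<Rightarrow> real" where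
  "Sb a m = (\<Sum>k\<le>m. (-1)^k * real (m choose k) / (real a + 1 + real k))"

lemma Sb_alt: "Sb a m = 1 / (real a + 1) - (\<Sum>k\<le>m. (-1)^k * real (m choose Suc k) / (real a + 2 + real k))"
proof -
  have "Sb a m = (\<Sum>k\<le>Suc m. (-1)^k * real (m choose k) / (real a + 1 + real k))"
    unfolding Sb_def by simp
  also have "\<dots> = 1 / (real a + 1) + (\<Sum>k\<le>m. (-1)^(Suc k) * real (m choose Suc k) / (real a + 1 + real (Suc k)))"
    by (subst sum.atMost_Suc_shift) simp
  also have "\<dots> = 1 / (real a + 1) - (\<Sum>k\<le>m. (-1)^k * real (m choose Suc k) / (real a + 2 + real k))"
    by (simp add: sum_negf[symmetric] add_ac)
  finally show ?thesis .
qed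

lemma Sb_Suc: "Sb a (Suc m) = Sb a m - Sb (Suc a) m"
proof -
  have "Sb a (Suc m) = 1 / (real a + 1) + (\<Sum>k\<le>m. (-1)^(Suc k) * real (Suc m choose Suc k) / (real a + 1 + real (Suc k)))"
    unfolding Sb_def by (subst sum.atMost_Suc_shift) simp
  also have "\<dots> = 1 / (real a + 1) - (\<Sum>k\<le>m. (-1)^k * real (m choose Suc k) / (real a + 2 + real k))
       - (\<Sum>k\<le>m. (-1)^k * real (m choose k) / (real (Suc a) + 1 + real k))"
    by (simp add: sum_negf[symmetric] sum.distrib[symmetric] add_ac add_divide_distrib ring_distribs diff_divide_distrib)
  also have "\<dots> = Sb a m - Sb (Suc a) m" unfolding Sb_alt[of a m] by (simp add: Sb_def)
  finally show ?thesis .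
qed

lemma Sb_closed: "Sb a m = fact m * fact a / fact (a + m + 1)"
proof (induction m arbitrary: a)
  case 0
  then show ?case by (simp add: Sb_def)
next
  case (Suc m)
  have "Sb a (Suc m) = fact m * fact a / fact (a + m + 1) - fact m * fact (Suc a) / fact (Suc a + m + 1)"
    by (simp add: Sb_Suc Suc.IH)
  also have "\<dots> = fact (Suc m) * fact a / fact (a + Suc m + 1)"
  proof -
    have e1: "(fact (a + m + 1)::real) = real (a+m+1) * fact (a+m)" by (simp add: algebra_simps)
    have e2: "(fact (Suc a + m + 1)::real) = real (a+m+2) * (real (a+m+1) * fact (a+m))"
    proof -
      have h: "Suc a + m + 1 = Suc (Suc (a+m))" by simp
      show ?thesis unfolding h fact_Suc by simp
    qed
    have e3: "(fact (a + Suc m + 1)::real) = real (a+m+2) * (real (a+m+1) * fact (a+m))"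
      using e2 by simp
    have e4: "(fact (Suc a)::real) = real (a+1) * fact a" by simp
    have e5: "(fact (Suc m)::real) = real (m+1) * fact m" by simp
    have nz: "(fact (a+m)::real) \<noteq> 0" by simp
    have gen: "\<And>x y F M A::real. F \<noteq> 0 \<Longrightarrow> x \<ge> 0 \<Longrightarrow> y \<ge> 0 \<Longrightarrow>
       M*A/((x+y+1)*F) - M*((x+1)*A)/((x+y+2)*((x+y+1)*F)) = ((y+1)*M)*A/((x+y+2)*((x+y+1)*F))"
    proof -
      fix x y F M A :: real
      assume F: "F \<noteq> 0" and x: "x \<ge> 0" and y: "y \<ge> 0"
      have h1: "x + y + 1 \<noteq> 0" "x + y + 2 \<noteq> 0" using x y by linarith+
      have "M*A/((x+y+1)*F) = (x+y+2)*(M*A)/((x+y+2)*((x+y+1)*F))" using h1 by simp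
      then have "M*A/((x+y+1)*F) - M*((x+1)*A)/((x+y+2)*((x+y+1)*F)) =
          ((x+y+2)*(M*A) - M*((x+1)*A))/((x+y+2)*((x+y+1)*F))" by (simp add: diff_divide_distrib)
      also have "(x+y+2)*(M*A) - M*((x+1)*A) = ((y+1)*M)*A" by (simp add: algebra_simps)
      finally show "M*A/((x+y+1)*F) - M*((x+1)*A)/((x+y+2)*((x+y+1)*F)) = ((y+1)*M)*A/((x+y+2)*((x+y+1)*F))" .
    qed
    show ?thesis unfolding e1 e2 e3 e4 e5 using gen[OF nz, of "real a" "real m" "fact m" "fact a"] by (simp add: add_ac)
  qed
  finally show ?case .
qed

lemma poch_nz: assumes "R \<notin> \<int>" shows "pochhammer (R - real j) N \<noteq> 0"
proof
  assume "pochhammer (R - real j) N = 0"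
  then obtain k where "R - real j = - real k" by (auto simp: pochhammer_eq_0_iff)
  then have "R = of_int (int j - int k)" by simp
  then show False using assms by (metis Ints_of_int)
qed

definition gG :: "real \<Rightarrow> nat \<Rightarrow> nat \<Rightarrow> real" where
  "gG R s t = gamma_ratio R s t / (fact s * fact t * (1 + real s + real t))"

lemma arow:
  assumes R: "R \<notin> \<int>" and jn: "j < n"
  shows "(\<Sum>k<n. (-1)^k * gG R a k * htilde (R - real j) (int j - int k)) = htilde (R - real j) (int a + 1 + int j)"
proof -
  define P where "P = pochhammer (R - real j) (a + j + 1)"
  have P0: "P \<noteq> 0" unfolding P_def by (rule poch_nz[OF R])
  have "(\<Sum>k<n. (-1)^k * gG R a k * htilde (R - real j) (int j - int k)) =
        (\<Sum>k\<le>j. (-1)^k * gG R a k * htilde (R - real j) (int j - int k))"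
    by (rule sum.mono_neutral_right) (use jn in \<open>auto simp: htilde_def\<close>)
  also have "\<dots> = (\<Sum>k\<le>j. (1 / (fact a * fact j * P)) * ((-1)^k * real (j choose k) / (real a + 1 + real k)))"
  proof (rule sum.cong[OF refl])
    fix k assume "k \<in> {..j}"
    then have kj: "k \<le> j" by simp
    have i1: "j - k + (a + k + 1) = a + j + 1" using kj by simp
    have i2: "R - real j + real (j - k) = R - real k" using kj by (simp add: of_nat_diff)
    have pp: "pochhammer (R - real j) (j - k) * pochhammer (R - real k) (a + k + 1) = P"
      unfolding P_def using pochhammer_product'[of "R - real j" "j - k" "a + k + 1"]
      unfolding i1 i2 by simp
    have n1: "pochhammer (R - real j) (j - k) \<noteq> 0" by (rule poch_nz[OF R])
    have n2: "pochhammer (R - real k) (a + k + 1) \<noteq> 0" by (rule poch_nz[OF R])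
    have nj: "nat (int j - int k) = j - k" using kj by simp
    have bf: "real (j choose k) = fact j / (fact k * fact (j - k))" by (rule binomial_fact[OF kj])
    show "(-1)^k * gG R a k * htilde (R - real j) (int j - int k) =
        (1 / (fact a * fact j * P)) * ((-1)^k * real (j choose k) / (real a + 1 + real k))"
      unfolding gG_def gamma_ratio_def htilde_def nj bf pp[symmetric] using kj n1 n2
      by (simp add: field_simps add_ac)
  qed
  also have "\<dots> = (1 / (fact a * fact j * P)) * Sb a j"
    unfolding Sb_def by (simp add: sum_distrib_left)
  also have "\<dots> = 1 / (fact (a + j + 1) * P)"
    unfolding Sb_closed by (simp add: field_simps)
  also have "\<dots> = htilde (R - real j) (int a + 1 + int j)"
    unfolding htilde_def P_def by (simp add: nat_add_distrib add_ac)
  finally show ?thesis .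
qed

lemma part_mono:
  assumes "is_partition lam" "1 \<le> i" "i \<le> j"
  shows "part lam j \<le> part lam i"
proof (cases "j \<le> length lam")
  case True
  show ?thesis
  proof (cases "i = j")
    case False
    then have "i - 1 < j - 1" using assms by simp
    then have "lam ! (j-1) \<le> lam ! (i-1)"
      using sorted_wrt_nth_less[of "(\<ge>)" lam "i-1" "j-1"] assms(1) True assms
      unfolding is_partition_def by simp
    then show ?thesis using True assms unfolding part_def by simp
  qed simp
qed (simp add: part_def)

lemma part_pos:
  assumes "is_partition lam" "1 \<le> i" "i \<le> length lam"
  shows "1 \<le> part lam i"
proof -
  have "lam ! (i-1) \<in> set lam" using assms by simp
  then have "lam ! (i-1) \<noteq> 0" using assms(1) unfolding is_partition_def by metis
  then show ?thesis using assms unfolding part_def by simp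
qed

lemma part_zero: "length lam < i \<Longrightarrow> part lam i = 0"
  unfolding part_def by simp

lemma downset:
  assumes "S \<subseteq> {1..n}" "\<forall>k\<in>S. \<forall>k'. 1 \<le> k' \<longrightarrow> k' \<le> k \<longrightarrow> k' \<in> S"
  shows "S = {1..card S}"
proof (cases "S = {}")
  case False
  have fin: "finite S" using assms(1) finite_subset by blast
  define m where "m = Max S"
  have "m \<in> S" unfolding m_def using fin False by simp
  have "S = {1..m}"
  proof
    show "S \<subseteq> {1..m}" using assms(1) fin unfolding m_def by auto
    show "{1..m} \<subseteq> S" using assms(2) \<open>m \<in> S\<close> by auto
  qed
  then show ?thesis by simp
qed simp

lemma rank_char:
  assumes "is_partition lam" "1 \<le> i" "i \<le> length lam"
  shows "i \<le> part lam i \<longleftrightarrow> i \<le> prank lam"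
proof -
  let ?S = "{i \<in> {1..length lam}. i \<le> part lam i}"
  have "?S = {1..card ?S}"
  proof (rule downset[of _ "length lam"])
    show "\<forall>k\<in>?S. \<forall>k'. 1 \<le> k' \<longrightarrow> k' \<le> k \<longrightarrow> k' \<in> ?S"
    proof (intro ballI allI impI)
      fix k k' assume k: "k \<in> ?S" and k': "1 \<le> k'" "k' \<le> k"
      have "part lam k \<le> part lam k'" by (rule part_mono[OF assms(1) k'])
      then show "k' \<in> ?S" using k k' by auto
    qed
  qed auto
  then have "i \<in> ?S \<longleftrightarrow> i \<in> {1..prank lam}" unfolding prank_def by simp
  then show ?thesis using assms by auto
qed

lemma prank_le: "prank lam \<le> length lam"
  unfolding prank_def by (rule order.trans[OF card_mono[of "{1..length lam}"]]) auto

lemma conj_char: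
  assumes "is_partition lam" "1 \<le> q" "1 \<le> k"
  shows "q \<le> part lam k \<longleftrightarrow> k \<le> conj_part lam q"
proof -
  let ?S = "{k \<in> {1..length lam}. q \<le> part lam k}"
  have "?S = {1..card ?S}"
  proof (rule downset[of _ "length lam"])
    show "\<forall>k\<in>?S. \<forall>k'. 1 \<le> k' \<longrightarrow> k' \<le> k \<longrightarrow> k' \<in> ?S"
    proof (intro ballI allI impI)
      fix k k' assume k: "k \<in> ?S" and k': "1 \<le> k'" "k' \<le> k"
      have "part lam k \<le> part lam k'" by (rule part_mono[OF assms(1) k'])
      then show "k' \<in> ?S" using k k' by auto
    qed
  qed auto
  then have eq: "?S = {1..conj_part lam q}" unfolding conj_part_def by simp
  show ?thesis
  proof (cases "k \<le> length lam")
    case True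
    then have "k \<in> ?S \<longleftrightarrow> k \<in> {1..conj_part lam q}" using eq by simp
    then show ?thesis using assms True by auto
  next
    case False
    have "conj_part lam q \<le> length lam"
      unfolding conj_part_def by (rule order.trans[OF card_mono[of "{1..length lam}"]]) auto
    then show ?thesis using False part_zero[of lam k] assms by auto
  qed
qed

lemma conj_le: "conj_part lam q \<le> length lam"
  unfolding conj_part_def by (rule order.trans[OF card_mono[of "{1..length lam}"]]) auto

lemma conj_anti: "q \<le> q' \<Longrightarrow> conj_part lam q' \<le> conj_part lam q"
  unfolding conj_part_def by (rule card_mono) auto

lemma det_U:
  fixes R :: real
  shows "det (mat n n (\<lambda>(k,j). htilde (R - real j) (int j - int k))) = 1"
proof -
  have "det (mat n n (\<lambda>(k,j). htilde (R - real j) (int j - int k))) =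
     prod_list (diag_mat (mat n n (\<lambda>(k,j). htilde (R - real j) (int j - int k))))"
    by (rule det_upper_triangular[of _ n]) (auto simp: upper_triangular_def htilde_def)
  also have "\<dots> = 1" by (simp add: prod_list_diag_prod htilde_def)
  finally show ?thesis .
qed

theorem stilde_giambelli:
  fixes R :: real
  assumes lp: "is_partition lam" and R: "R \<notin> \<int>"
  shows "stilde R lam = det (mat (prank lam) (prank lam)
     (\<lambda>(i,j). gG R (frob_s lam (i+1)) (frob_t lam (j+1))))"
proof -
  define n where "n = length lam"
  define d where "d = prank lam"
  define p where "p = part lam"
  define c where "c = conj_part lam"
  define s where "s = (\<lambda>i. frob_s lam (i+1))"
  define t where "t = (\<lambda>j. frob_t lam (j+1))"
  define u where "u = (\<lambda>r. (d + r) - p (d + r + 1))"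
  have dn: "d \<le> n" unfolding d_def n_def by (rule prank_le)
  have pmono: "\<And>i j. 1 \<le> i \<Longrightarrow> i \<le> j \<Longrightarrow> p j \<le> p i" unfolding p_def by (rule part_mono[OF lp])
  have rk: "\<And>i. 1 \<le> i \<Longrightarrow> i \<le> n \<Longrightarrow> i \<le> p i \<longleftrightarrow> i \<le> d"
    unfolding p_def d_def n_def by (rule rank_char[OF lp])
  have cc: "\<And>q k. 1 \<le> q \<Longrightarrow> 1 \<le> k \<Longrightarrow> q \<le> p k \<longleftrightarrow> k \<le> c q"
    unfolding p_def c_def by (rule conj_char[OF lp])
  have cle: "\<And>q. c q \<le> n" unfolding c_def n_def by (rule conj_le)
  have canti: "\<And>q q'. q \<le> q' \<Longrightarrow> c q' \<le> c q" unfolding c_def by (rule conj_anti)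
  have s_eq: "\<And>i. s i = p (i+1) - (i+1)" unfolding s_def p_def frob_s_def by simp
  have t_eq: "\<And>j. t j = c (j+1) - (j+1)" unfolding t_def c_def frob_t_def by simp
  have ctop: "\<And>j. j < d \<Longrightarrow> j + 1 \<le> c (j+1)"
  proof -
    fix j assume "j < d"
    then have "j + 1 \<le> p (j+1)" using rk[of "j+1"] dn by simp
    then show "j + 1 \<le> c (j+1)" using cc[of "j+1" "j+1"] by simp
  qed
  define Mj where "Mj = mat n n (\<lambda>(i,j). htilde (R - real j) (int (part lam (i + 1)) - int i + int j))"
  define N where "N = mat n n (\<lambda>(i,k). if i<d then (-1)^k * gG R (s i) k else of_bool (k = u (i-d)))"
  define U where "U = mat n n (\<lambda>(k,j). htilde (R - real j) (int j - int k))"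
  have st: "stilde R lam = det Mj" unfolding stilde_def Mj_def n_def by simp
  have fac: "Mj = N * U"
  proof (rule eq_matI)
    fix i j assume i: "i < dim_row (N * U)" and j: "j < dim_col (N * U)"
    then have i: "i < n" and j: "j < n" by (auto simp: N_def U_def)
    have "(N * U) $$ (i,j) = (\<Sum>k<n. N $$ (i,k) * U $$ (k,j))"
      using i j by (simp add: N_def U_def scalar_prod_def atLeast0LessThan)
    also have "\<dots> = Mj $$ (i,j)"
    proof (cases "i < d")
      case True
      have pi: "i + 1 \<le> p (i+1)" using rk[of "i+1"] True i by simp
      have "(\<Sum>k<n. N $$ (i,k) * U $$ (k,j)) = (\<Sum>k<n. (-1)^k * gG R (s i) k * htilde (R - real j) (int j - int k))"
        using True i j by (intro sum.cong) (auto simp: N_def U_def)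
      also have "\<dots> = htilde (R - real j) (int (s i) + 1 + int j)" by (rule arow[OF R j])
      also have "\<dots> = Mj $$ (i,j)" using i j pi unfolding Mj_def s_eq p_def by (simp add: of_nat_diff)
      finally show ?thesis .
    next
      case False
      have pi: "p (i+1) \<le> i" using rk[of "i+1"] False i by simp
      have ui: "u (i - d) = i - p (i+1)" unfolding u_def using False by simp
      have "(\<Sum>k<n. N $$ (i,k) * U $$ (k,j)) = (\<Sum>k<n. if k = u (i-d) then U $$ (k,j) else 0)"
        using False i j by (intro sum.cong) (auto simp: N_def U_def)
      also have "\<dots> = U $$ (u (i-d), j)" using ui i by simp
      also have "\<dots> = Mj $$ (i,j)" using i j pi ui unfolding Mj_def U_def p_def by (simp add: of_nat_diff algebra_simps)
      finally show ?thesis .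
    qed
    finally show "Mj $$ (i,j) = (N * U) $$ (i,j)" by simp
  qed (auto simp: Mj_def N_def U_def)
  have "det Mj = det N * det U" unfolding fac by (rule det_mult[of _ n]) (auto simp: N_def U_def)
  also have "det U = 1" unfolding U_def by (rule det_U)
  also have "det N = det (mat d d (\<lambda>(i,k). (-1)^(t k) * ((-1)^(t k) * gG R (s i) (t k))))"
    unfolding N_def
  proof (rule lemG[where C = "\<lambda>i k. (-1)^k * gG R (s i) k"])
    show "d \<le> n" by (rule dn)
    show "\<forall>k<d. t k < n"
    proof (intro allI impI)
      fix k assume k: "k < d"
      have "k + 1 \<le> c (k+1)" "c (k+1) \<le> n" using ctop[OF k] cle by auto
      then show "t k < n" unfolding t_eq using k dn by arith
    qed
    show "\<forall>k k'. k < k' \<longrightarrow> k' < d \<longrightarrow> t k' < t k"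
    proof (intro allI impI)
      fix k k' assume "k < k'" "k' < d"
      then have "c (k'+1) \<le> c (k+1)" "k' + 1 \<le> c (k'+1)" using canti ctop by auto
      then show "t k' < t k" unfolding t_eq using \<open>k < k'\<close> by linarith
    qed
    show "\<forall>r r'. r < r' \<longrightarrow> r' < n - d \<longrightarrow> u r < u r'"
    proof (intro allI impI)
      fix r r' assume rr: "r < r'" "r' < n - d"
      have "p (d + r' + 1) \<le> p (d + r + 1)" using pmono rr by simp
      moreover have b1: "d + r + 1 \<le> n" "d + r' + 1 \<le> n" using rr by arith+
      moreover have "p (d + r + 1) \<le> d + r" using rk[of "d+r+1"] b1 by simp
      moreover have "p (d + r' + 1) \<le> d + r'" using rk[of "d+r'+1"] b1 by simp
      ultimately show "u r < u r'" unfolding u_def using rr by linarith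
    qed
    show "\<forall>r<n - d. u r < n" unfolding u_def by auto
    show "\<forall>k<d. \<forall>r<n - d. t k \<noteq> u r"
    proof (intro allI impI)
      fix k r assume k: "k < d" and r: "r < n - d"
      define P where "P = d + r + 1"
      define Q where "Q = k + 1"
      have Pn: "P \<le> n" "d < P" using r unfolding P_def by arith+
      have pP: "p P \<le> P - 1" using rk[of P] Pn by simp
      have cQ: "Q \<le> c Q" using ctop k unfolding Q_def by simp
      have ch: "Q \<le> p P \<longleftrightarrow> P \<le> c Q" using cc[of Q P] unfolding P_def Q_def by simp
      have "t k = c Q - Q" unfolding t_eq Q_def by simp
      moreover have "u r = P - 1 - p P" unfolding u_def P_def by simp
      ultimately show "t k \<noteq> u r" using pP cQ ch unfolding P_def Q_def by (cases "Q \<le> p P") auto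
    qed
  qed
  also have "mat d d (\<lambda>(i,k). (-1)^(t k) * ((-1)^(t k) * gG R (s i) (t k))) =
      mat d d (\<lambda>(i,j). gG R (frob_s lam (i+1)) (frob_t lam (j+1)))"
    by (intro eq_matI) (auto simp: s_def t_def power_add[symmetric] mult.assoc[symmetric] simp flip: power_add)
  finally show ?thesis unfolding st d_def by simp
qed

lemma hook_part: "part (hook a b) i = (if i = 1 then a + 1 else if 2 \<le> i \<and> i \<le> b + 1 then 1 else 0)"
  unfolding part_def hook_def
  by (cases i; cases "i - 1") (auto simp: nth_Cons')

lemma sorted_rep1: "sorted_wrt (\<ge>) (replicate b (1::nat))"
  by (induction b) auto

lemma hook_is_partition: "is_partition (hook a b)"
  unfolding is_partition_def hook_def using sorted_rep1[of b] by auto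

lemma hook_len: "length (hook a b) = b + 1" unfolding hook_def by simp

lemma hook_prank: "prank (hook a b) = 1"
proof -
  have "{i \<in> {1..length (hook a b)}. part (hook a b) i \<ge> i} = {1}"
    unfolding hook_len by (auto simp: hook_part)
  then show ?thesis unfolding prank_def by simp
qed

lemma hook_frob: "frob_s (hook a b) 1 = a" "frob_t (hook a b) 1 = b"
proof -
  show "frob_s (hook a b) 1 = a" unfolding frob_s_def by (simp add: hook_part)
  have "{k \<in> {1..length (hook a b)}. part (hook a b) k \<ge> 1} = {1..b+1}"
    unfolding hook_len by (auto simp: hook_part)
  then show "frob_t (hook a b) 1 = b" unfolding frob_t_def conj_part_def by simp
qed

lemma hook_val:
  fixes R :: real
  assumes R: "R \<notin> \<int>"
  shows "stilde R (hook a b) = gG R a b"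
proof -
  have "stilde R (hook a b) = det (mat 1 1 (\<lambda>(i,j). gG R (frob_s (hook a b) (i+1)) (frob_t (hook a b) (j+1))))"
    using stilde_giambelli[OF hook_is_partition R] hook_prank by simp
  also have "\<dots> = gG R a b" using hook_frob by (subst det_single) auto
  finally show ?thesis .
qed

theorem mainTheorem9:
  fixes lam :: "nat list" and R :: real
  assumes "is_partition lam" and "lam \<noteq> []" and "R \<notin> \<int>"
  defines "d \<equiv> prank lam"
  shows "stilde R lam =
           det (mat d d (\<lambda>(i, j). stilde R (hook (frob_s lam (i + 1)) (frob_t lam (j + 1))))) \<and>
         det (mat d d (\<lambda>(i, j). stilde R (hook (frob_s lam (i + 1)) (frob_t lam (j + 1))))) =
           det (mat d d (\<lambda>(i, j).
              gamma_ratio R (frob_s lam (i + 1)) (frob_t lam (j + 1)) /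
              (fact (frob_s lam (i + 1)) * fact (frob_t lam (j + 1)) *
               (1 + real (frob_s lam (i + 1)) + real (frob_t lam (j + 1))))))"
  using stilde_giambelli[OF assms(1) assms(3)] unfolding d_def
  by (simp add: hook_val[OF assms(3)] gG_def)

end
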